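(* Let $\beta>1$, $\alpha\in(1,2)$ and let $f:\mathbb{N}\times\mathbb{R}_+\to\mathbb{R}$ satisfy $f(1,\lambda)\asymp\lambda^\alpha$. Suppose there exist integers $n_k\nearrow\infty$ and $a_n=n^{1/\alpha}L(n)$ with $L$ slowly varying at $\infty$ such that for every $l\in\mathbb{N}$ and $\lambda>0$, \[n_k\log\Big(\mathbf{E}\Big[E^\omega\Big[\exp\Big(-\tfrac{\lambda}{a_{n_k}}(\eta_0-\mathbb{E}[\eta_0])\Big)\Big]^l\Big]\Big)\to f(l,\lambda)\quad\text{as }k\to\infty.\] Then for each $\lambda>0$ there exist constants $c,C$ depending only on $\lambda$ such that for all sufficiently large $k$ (independently of $l$) and all $l\in\mathbb{N}$, \[cl\ \le\ n_k\log\Big(\mathbf{E}\Big[E^\omega\Big[\exp\Big(-\tfrac{\lambda}{a_{n_k}}(\eta_0-\mathbb{E}[\eta_0])\Big)\Big]^l\Big]\Big)\ \le\ Cl^2.\]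
   Context: Fix $\beta\ge1$ and a law $\pi$ on the set of probability measures on $(0,\infty)$. An environment $\omega=(\omega_x)_{x\in\mathbb{Z}}$ has law $\mathbf{P}:=\pi^{\otimes\mathbb{Z}}$ (expectation $\mathbf{E}$). Under the quenched law $P^\omega$ (expectation $E^\omega$), $\eta_0$ is a random variable with law $\omega_0$. The annealed law is $\mathbb{P}=\int P^\omega\,\mathbf{P}(d\omega)$ with expectation $\mathbb{E}$ (so $\mathbb{E}[\eta_0]=\mathbf{E}[\int u\,\omega_0(du)]$). $f(1,\lambda)\asymp\lambda^\alpha$ means $c'\lambda^\alpha\le f(1,\lambda)\le C'\lambda^\alpha$ for all $\lambda>0$, for some constants $0<c'\le C'<\infty$. *)

theory Defs
  imports "HOL-Probability.Probability"
begin

text \<open>State space of \<open>\<eta>\<^sub>0\<close>: the half-line (0,\<infinity>) with its Borel sets.\<close>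
definition pos_line :: "real measure" where
  "pos_line = restrict_space borel {0<..}"

text \<open>Annealed mean \<open>\<bbbE>[\<eta>\<^sub>0] = \<^bold>E[\<integral> u \<omega>\<^sub>0(du)]\<close>, where \<open>\<pi>\<close> is the law of \<open>\<omega>\<^sub>0\<close>.\<close>
definition annealed_mean :: "real measure measure \<Rightarrow> real" where
  "annealed_mean \<pi> = (\<integral>\<mu>. (\<integral>u. u \<partial>\<mu>) \<partial>\<pi>)"

definition lap_moment :: "real measure measure \<Rightarrow> real \<Rightarrow> real \<Rightarrow> nat \<Rightarrow> real" where
  "lap_moment \<pi> a lam l =
     (\<integral>\<mu>. (\<integral>u. exp (- (lam / a) * (u - annealed_mean \<pi>)) \<partial>\<mu>) ^ l \<partial>\<pi>)"

definition slowly_varying :: "(real \<Rightarrow> real) \<Rightarrow> bool" where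
  "slowly_varying L \<longleftrightarrow> (\<forall>\<^sub>F x in at_top. L x > 0) \<and>
     (\<forall>c>0. ((\<lambda>x. L (c * x) / L x) \<longlongrightarrow> 1) at_top)"

end

theory Submission
  imports Defs
begin


lemma ln_to_lin:
  fixes N M K :: real
  assumes N: "1 \<le> N" and M: "1 \<le> M" and K: "N * ln M \<le> K"
  shows "N * (M - 1) \<le> exp K * K"
proof -
  have lnM: "0 \<le> ln M" using M by simp
  have "ln M \<le> K" using N lnM K by (smt (verit) mult_le_cancel_right1)
  then have Mle: "M \<le> exp K" using M by (metis exp_ln less_le_trans zero_less_one exp_le_cancel_iff)
  have "ln (1 / M) \<le> 1 / M - 1" using M by (intro ln_le_minus_one) auto
  then have "M - 1 \<le> M * ln M" using M by (simp add: ln_div field_simps)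
  then have "N * (M - 1) \<le> N * (M * ln M)" using N by (intro mult_left_mono) auto
  also have "\<dots> = M * (N * ln M)" by simp
  also have "\<dots> \<le> exp K * K"
    using Mle K M lnM N by (intro mult_mono) auto
  finally show ?thesis .
qed

lemma combine:
  fixes N s G1 G2 Gl S B1 B2 :: real and l :: nat
  assumes N: "1 \<le> N" and s: "0 \<le> s" and Gl: "0 < Gl"
    and up: "Gl \<le> 1 - real l * (1 - G1) + (real l)\<^sup>2 / 2 * (1 - 2 * G1 + G2)"
    and M1: "1 \<le> exp s * G1" and M2: "1 \<le> exp (2 * s) * G2"
    and S: "N * s\<^sup>2 \<le> S" and B1: "N * (exp s * G1 - 1) \<le> B1" and B2: "N * (exp (2 * s) * G2 - 1) \<le> B2"
    and l: "1 \<le> l"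
  shows "N * ln (exp (real l * s) * Gl) \<le> (2 * S + B1 + B2) * (real l)\<^sup>2"
proof -
  define A where "A = s - 1 + G1"
  define B where "B = 1 - 2 * G1 + G2"
  have "ln (exp (real l * s) * Gl) = real l * s + ln Gl" using Gl by (simp add: ln_mult)
  also have "\<dots> \<le> real l * s + (Gl - 1)" using Gl ln_le_minus_one by auto
  also have "\<dots> \<le> real l * A + (real l)\<^sup>2 / 2 * B" using up unfolding A_def B_def by (simp add: algebra_simps)
  finally have lnle: "ln (exp (real l * s) * Gl) \<le> real l * A + (real l)\<^sup>2 / 2 * B" .
  have es: "exp (- s) * exp s = 1" by (simp add: mult_exp_exp)
  have G1e: "G1 = exp (- s) * (exp s * G1)" using es by simp
  have G2e: "G2 = exp (- s) ^ 2 * (exp (2 * s) * G2)"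
    by (simp add: exp_minus power2_eq_square field_simps mult_exp_exp)
  have e1: "exp (- s) \<le> 1 / (1 + s)"
    using exp_ge_add_one_self[of s] s by (simp add: exp_minus field_simps)
  have e2: "1 - s \<le> exp (- s)" using exp_ge_add_one_self[of "- s"] by simp
  have e3: "exp (- s) \<le> 1" using s by simp
  have e0: "0 < exp (- s)" by simp
  have A: "A \<le> s\<^sup>2 + (exp s * G1 - 1)"
  proof -
    have "A = (s - 1 + exp (- s)) + exp (- s) * (exp s * G1 - 1)" unfolding A_def
      using G1e by (simp add: algebra_simps)
    also have "\<dots> \<le> (s - 1 + 1 / (1 + s)) + 1 * (exp s * G1 - 1)"
      using e1 e3 M1 by (intro add_mono mult_right_mono) auto
    also have "s - 1 + 1 / (1 + s) = s\<^sup>2 / (1 + s)" using s by (simp add: field_simps power2_eq_square)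
    also have "\<dots> \<le> s\<^sup>2" using s by (simp add: divide_le_eq power2_eq_square mult_le_cancel_left1)
    finally show ?thesis by simp
  qed
  have B: "B \<le> s\<^sup>2 + (exp (2 * s) * G2 - 1)"
  proof -
    have "B = (1 - exp (- s))\<^sup>2 - 2 * exp (- s) * (exp s * G1 - 1) + exp (- s) ^ 2 * (exp (2 * s) * G2 - 1)"
    proof -
      have gen: "\<And>e c1 c2. G1 = e * c1 \<Longrightarrow> G2 = e ^ 2 * c2 \<Longrightarrow>
        1 - 2 * G1 + G2 = (1 - e)\<^sup>2 - 2 * e * (c1 - 1) + e ^ 2 * (c2 - 1)"
        by (simp add: algebra_simps power2_eq_square)
      show ?thesis unfolding B_def by (rule gen[OF G1e G2e])
    qed
    also have "\<dots> \<le> s\<^sup>2 - 0 + 1 * (exp (2 * s) * G2 - 1)"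
    proof (intro add_mono diff_mono mult_right_mono)
      show "(1 - exp (- s))\<^sup>2 \<le> s\<^sup>2" using e2 e3 by (intro power_mono) auto
      show "0 \<le> 2 * exp (- s) * (exp s * G1 - 1)" using M1 by simp
      show "exp (- s) ^ 2 \<le> 1" using e3 e0 by (simp add: power_le_one)
      show "0 \<le> exp (2 * s) * G2 - 1" using M2 by simp
    qed
    finally show ?thesis by simp
  qed
  have ll: "real l \<le> (real l)\<^sup>2" using l by (simp add: power2_eq_square)
  have S0: "0 \<le> S" using S N by (smt (verit) mult_nonneg_nonneg zero_le_power2)
  have B10: "0 \<le> B1" using B1 N M1 by (smt (verit) mult_nonneg_nonneg)
  have B20: "0 \<le> B2" using B2 N M2 by (smt (verit) mult_nonneg_nonneg)
  have "N * ln (exp (real l * s) * Gl) \<le> N * (real l * A + (real l)\<^sup>2 / 2 * B)"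
    using lnle N by (intro mult_left_mono) auto
  also have "\<dots> = real l * (N * A) + (real l)\<^sup>2 / 2 * (N * B)" by (simp add: algebra_simps)
  also have "\<dots> \<le> real l * (S + B1) + (real l)\<^sup>2 / 2 * (S + B2)"
  proof (intro add_mono mult_left_mono)
    have "N * A \<le> N * (s\<^sup>2 + (exp s * G1 - 1))" using A N by (intro mult_left_mono) auto
    then show "N * A \<le> S + B1" using S B1 by (simp add: algebra_simps)
    have "N * B \<le> N * (s\<^sup>2 + (exp (2 * s) * G2 - 1))" using B N by (intro mult_left_mono) auto
    then show "N * B \<le> S + B2" using S B2 by (simp add: algebra_simps)
  qed auto
  also have "\<dots> \<le> (real l)\<^sup>2 * (S + B1) + (real l)\<^sup>2 * (S + B2)"
    using ll S0 B10 B20 by (intro add_mono mult_right_mono) auto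
  also have "\<dots> = (2 * S + B1 + B2) * (real l)\<^sup>2" by (simp add: algebra_simps)
  finally show ?thesis .
qed



lemma space_pos_line: "space pos_line = {0<..}"
  by (simp add: pos_line_def space_restrict_space)

lemma meas_pos_line: "(\<lambda>u::real. g u) \<in> borel_measurable borel \<Longrightarrow> g \<in> borel_measurable pos_line"
  unfolding pos_line_def by (rule measurable_restrict_space1)

definition Zf :: "real \<Rightarrow> real measure \<Rightarrow> real" where
  "Zf t \<mu> = (\<integral>u. exp (- t * u) \<partial>\<mu>)"

lemma poly_upper_aux:
  fixes w :: real assumes "0 \<le> w" "w \<le> 1"
  shows "(1 - w) ^ l \<le> 1 - real l * w + real l * (real l - 1) / 2 * w\<^sup>2"
proof (induction l)
  case 0 then show ?case by simp
next
  case (Suc l)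
  have "(1 - w) ^ Suc l = (1 - w) * (1 - w) ^ l" by simp
  also have "\<dots> \<le> (1 - w) * (1 - real l * w + real l * (real l - 1) / 2 * w\<^sup>2)"
    using Suc assms by (intro mult_left_mono) auto
  also have "\<dots> \<le> 1 - real (Suc l) * w + real (Suc l) * (real (Suc l) - 1) / 2 * w\<^sup>2"
  proof -
    have "0 \<le> real l * (real l - 1) / 2 * w ^ 3"
      using assms by (cases l) (auto intro!: mult_nonneg_nonneg divide_nonneg_nonneg)
    have "(1 - w) * (1 - real l * w + real l * (real l - 1) / 2 * w\<^sup>2) =
      1 - real (Suc l) * w + real (Suc l) * (real (Suc l) - 1) / 2 * w\<^sup>2 - real l * (real l - 1) / 2 * w ^ 3"
      by (simp add: field_simps power2_eq_square power3_eq_cube)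
    then show ?thesis using \<open>0 \<le> real l * (real l - 1) / 2 * w ^ 3\<close> by linarith
  qed
  finally show ?case .
qed

lemma poly_upper:
  fixes z :: real assumes "0 \<le> z" "z \<le> 1"
  shows "z ^ l \<le> 1 - real l * (1 - z) + (real l)\<^sup>2 / 2 * (1 - z)\<^sup>2"
proof -
  have "z ^ l = (1 - (1 - z)) ^ l" by simp
  also have "\<dots> \<le> 1 - real l * (1 - z) + real l * (real l - 1) / 2 * (1 - z)\<^sup>2"
    using assms by (intro poly_upper_aux) auto
  also have "\<dots> \<le> 1 - real l * (1 - z) + (real l)\<^sup>2 / 2 * (1 - z)\<^sup>2"
  proof -
    have "real l * (real l - 1) / 2 * (1 - z)\<^sup>2 \<le> (real l)\<^sup>2 / 2 * (1 - z)\<^sup>2"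
      by (intro mult_right_mono) (auto simp: power2_eq_square intro!: mult_left_mono)
    then show ?thesis by linarith
  qed
  finally show ?thesis .
qed

lemma tangent_power:
  fixes x a :: real assumes "0 \<le> x" "0 < a"
  shows "a ^ l + real l * a ^ (l - 1) * (x - a) \<le> x ^ l"
proof (cases l)
  case 0 then show ?thesis by simp
next
  case (Suc k)
  have "1 + real l * ((x - a) / a) \<le> (1 + (x - a) / a) ^ l"
    using assms by (intro Bernoulli_inequality) (simp add: field_simps)
  also have "1 + (x - a) / a = x / a" using assms by (simp add: field_simps)
  finally have "a ^ l * (1 + real l * ((x - a) / a)) \<le> a ^ l * (x / a) ^ l"
    using assms by (intro mult_left_mono) auto
  moreover have "a ^ l * (1 + real l * ((x - a) / a)) = a ^ l + real l * a ^ (l - 1) * (x - a)"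
    using assms Suc by (simp add: field_simps)
  moreover have "a ^ l * (x / a) ^ l = x ^ l" using assms by (simp add: power_divide)
  ultimately show ?thesis by simp
qed

definition Gf :: "real measure measure \<Rightarrow> real \<Rightarrow> nat \<Rightarrow> real" where
  "Gf \<pi> t l = (\<integral>\<mu>. (Zf t \<mu>) ^ l \<partial>\<pi>)"

context
  fixes \<pi> :: "real measure measure"
  assumes pi_law: "\<pi> \<in> space (prob_algebra (prob_algebra pos_line))"
begin

lemma pi_prob: "prob_space \<pi>" and sets_pi: "sets \<pi> = sets (prob_algebra pos_line)"
  using pi_law by (auto simp: space_prob_algebra)

lemma mu_facts:
  assumes "\<mu> \<in> space \<pi>"
  shows "prob_space \<mu>" "sets \<mu> = sets pos_line" "space \<mu> = {0<..}"
proof -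
  have "\<mu> \<in> space (prob_algebra pos_line)" using assms sets_eq_imp_space_eq[OF sets_pi] by simp
  then show "prob_space \<mu>" "sets \<mu> = sets pos_line" by (auto simp: space_prob_algebra)
  then show "space \<mu> = {0<..}" using sets_eq_imp_space_eq space_pos_line by metis
qed

lemma meas_int:
  fixes g :: "real \<Rightarrow> real"
  assumes "g \<in> borel_measurable pos_line"
  shows "(\<lambda>\<mu>. \<integral>u. g u \<partial>\<mu>) \<in> borel_measurable \<pi>"
proof -
  have "(\<lambda>\<mu>. \<integral>u. g u \<partial>\<mu>) \<in> borel_measurable (subprob_algebra pos_line)"
    using assms by measurable
  then have "(\<lambda>\<mu>. \<integral>u. g u \<partial>\<mu>) \<in> borel_measurable (prob_algebra pos_line)"
    unfolding prob_algebra_def by (rule measurable_restrict_space1)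
  then show ?thesis using sets_pi measurable_cong_sets by blast
qed

lemma Z_meas: "(\<lambda>\<mu>. Zf t \<mu>) \<in> borel_measurable \<pi>"
  unfolding Zf_def by (intro meas_int meas_pos_line) measurable

lemma Z_bounds:
  assumes "\<mu> \<in> space \<pi>" "0 \<le> t"
  shows "0 < Zf t \<mu>" "Zf t \<mu> \<le> 1"
proof -
  interpret P: prob_space \<mu> using mu_facts assms by auto
  have sp: "space \<mu> = {0<..}" using mu_facts assms by auto
  have meas: "(\<lambda>u. exp (- t * u)) \<in> borel_measurable \<mu>"
  proof -
    have "(\<lambda>u. exp (- t * u)) \<in> borel_measurable pos_line" by (rule meas_pos_line) measurable
    then show ?thesis using mu_facts(2)[OF assms(1)] measurable_cong_sets by blast
  qed
  have bnd: "u \<in> space \<mu> \<Longrightarrow> exp (- t * u) \<le> 1" for u using sp assms by auto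
  have int: "integrable \<mu> (\<lambda>u. exp (- t * u))"
    using bnd meas by (intro P.integrable_const_bound[where B=1]) auto
  have "Zf t \<mu> \<le> (\<integral>u. 1 \<partial>\<mu>)" unfolding Zf_def
    using int bnd by (intro integral_mono) auto
  then show "Zf t \<mu> \<le> 1" using P.prob_space by simp
  have ge: "0 \<le> Zf t \<mu>" unfolding Zf_def by simp
  have "Zf t \<mu> \<noteq> 0"
  proof
    assume "Zf t \<mu> = 0"
    then have "AE u in \<mu>. exp (- t * u) = 0"
      unfolding Zf_def using integral_nonneg_eq_0_iff_AE[OF int] by simp
    then have "AE u in \<mu>. False" by simp
    then show False using P.AE_False by simp
  qed
  with ge show "0 < Zf t \<mu>" by simp
qed


lemma Z_nonneg: "\<mu> \<in> space \<pi> \<Longrightarrow> 0 \<le> t \<Longrightarrow> 0 \<le> Zf t \<mu>"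
  using Z_bounds(1) less_imp_le by blast

lemma Zpow_int: "0 \<le> t \<Longrightarrow> integrable \<pi> (\<lambda>\<mu>. (Zf t \<mu>) ^ l)"
proof -
  assume t: "0 \<le> t"
  interpret P: prob_space \<pi> by (rule pi_prob)
  show ?thesis
  proof (rule P.integrable_const_bound[where B=1])
    show "AE \<mu> in \<pi>. norm (Zf t \<mu> ^ l) \<le> 1"
      using Z_bounds[OF _ t] Z_nonneg[OF _ t] by (intro AE_I2) (auto simp: abs_le_iff intro!: power_le_one order.trans[OF _ zero_le_power])
    show "(\<lambda>\<mu>. Zf t \<mu> ^ l) \<in> borel_measurable \<pi>" using Z_meas by measurable
  qed
qed

lemma Z_int: "0 \<le> t \<Longrightarrow> integrable \<pi> (\<lambda>\<mu>. Zf t \<mu>)"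
  using Zpow_int[of t 1] by simp

lemma G_pos: assumes t: "0 \<le> t" shows "0 < Gf \<pi> t l" "Gf \<pi> t l \<le> 1"
proof -
  interpret P: prob_space \<pi> by (rule pi_prob)
  have "Gf \<pi> t l \<le> (\<integral>\<mu>. 1 \<partial>\<pi>)" unfolding Gf_def
    using Zpow_int[OF t] Z_bounds[OF _ t] Z_nonneg[OF _ t] by (intro integral_mono) (auto intro!: power_le_one)
  then show "Gf \<pi> t l \<le> 1" using P.prob_space by simp
  have ge: "0 \<le> Gf \<pi> t l" unfolding Gf_def using Z_nonneg[OF _ t]
    by (intro integral_nonneg_AE AE_I2) auto
  have "Gf \<pi> t l \<noteq> 0"
  proof
    assume "Gf \<pi> t l = 0"
    then have "AE \<mu> in \<pi>. Zf t \<mu> ^ l = 0"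
      unfolding Gf_def using Z_nonneg[OF _ t] by (subst (asm) integral_nonneg_eq_0_iff_AE[OF Zpow_int[OF t]]) (auto intro!: AE_I2)
    then have "AE \<mu> in \<pi>. Zf t \<mu> = 0" by simp
    then have "AE \<mu> in \<pi>. False"
      by (rule AE_mp) (auto intro!: AE_I2 dest: Z_bounds(1)[OF _ t])
    then show False using P.AE_False by simp
  qed
  with ge show "0 < Gf \<pi> t l" by simp
qed

lemma G_jensen: assumes t: "0 \<le> t" shows "Gf \<pi> t 1 ^ l \<le> Gf \<pi> t l"
proof -
  interpret P: prob_space \<pi> by (rule pi_prob)
  define a where "a = Gf \<pi> t 1"
  have a: "0 < a" unfolding a_def by (rule G_pos[OF t])
  have "(\<integral>\<mu>. a ^ l + real l * a ^ (l - 1) * (Zf t \<mu> - a) \<partial>\<pi>) \<le> Gf \<pi> t l"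
    unfolding Gf_def using Zpow_int[OF t] Z_int[OF t] Z_nonneg[OF _ t] a
    by (intro integral_mono tangent_power) (auto intro!: Bochner_Integration.integrable_add integrable_mult_right Bochner_Integration.integrable_diff)
  moreover have "(\<integral>\<mu>. a ^ l + real l * a ^ (l - 1) * (Zf t \<mu> - a) \<partial>\<pi>) =
      a ^ l + real l * a ^ (l - 1) * ((\<integral>\<mu>. Zf t \<mu> \<partial>\<pi>) - a)"
    using Z_int[OF t] by (simp add: P.prob_space Bochner_Integration.integral_diff)
  moreover have "(\<integral>\<mu>. Zf t \<mu> \<partial>\<pi>) = a" unfolding a_def Gf_def by simp
  ultimately show ?thesis unfolding a_def by simp
qed

lemma G_upper: assumes t: "0 \<le> t"
  shows "Gf \<pi> t l \<le> 1 - real l * (1 - Gf \<pi> t 1) + (real l)\<^sup>2 / 2 * (1 - 2 * Gf \<pi> t 1 + Gf \<pi> t 2)"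
proof -
  interpret P: prob_space \<pi> by (rule pi_prob)
  have eq: "1 - real l * (1 - z) + (real l)\<^sup>2 / 2 * (1 - z)\<^sup>2 =
     (1 - real l + (real l)\<^sup>2 / 2) + (real l - (real l)\<^sup>2) * z + (real l)\<^sup>2 / 2 * z ^ 2" for z :: real
    by (simp add: power2_eq_square field_simps)
  have "Gf \<pi> t l \<le> (\<integral>\<mu>. (1 - real l + (real l)\<^sup>2 / 2) + (real l - (real l)\<^sup>2) * Zf t \<mu> + (real l)\<^sup>2 / 2 * Zf t \<mu> ^ 2 \<partial>\<pi>)"
    unfolding Gf_def
  proof (intro integral_mono)
    show "integrable \<pi> (\<lambda>\<mu>. (1 - real l + (real l)\<^sup>2 / 2) + (real l - (real l)\<^sup>2) * Zf t \<mu> + (real l)\<^sup>2 / 2 * Zf t \<mu> ^ 2)"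
      using Z_int[OF t] Zpow_int[OF t, of 2]
      by (intro Bochner_Integration.integrable_add integrable_mult_right) auto
    show "integrable \<pi> (\<lambda>\<mu>. Zf t \<mu> ^ l)" by (rule Zpow_int[OF t])
    fix \<mu> assume "\<mu> \<in> space \<pi>"
    then show "Zf t \<mu> ^ l \<le> (1 - real l + (real l)\<^sup>2 / 2) + (real l - (real l)\<^sup>2) * Zf t \<mu> + (real l)\<^sup>2 / 2 * Zf t \<mu> ^ 2"
      using poly_upper[of "Zf t \<mu>" l] Z_nonneg[OF _ t] Z_bounds(2)[OF _ t] eq by metis
  qed
  also have "(\<integral>\<mu>. (1 - real l + (real l)\<^sup>2 / 2) + (real l - (real l)\<^sup>2) * Zf t \<mu> + (real l)\<^sup>2 / 2 * Zf t \<mu> ^ 2 \<partial>\<pi>)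
     = (1 - real l + (real l)\<^sup>2 / 2) + (real l - (real l)\<^sup>2) * Gf \<pi> t 1 + (real l)\<^sup>2 / 2 * Gf \<pi> t 2"
    unfolding Gf_def using Z_int[OF t] Zpow_int[OF t, of 2]
    by (simp add: P.prob_space Bochner_Integration.integral_add)
  also have "\<dots> = 1 - real l * (1 - Gf \<pi> t 1) + (real l)\<^sup>2 / 2 * (1 - 2 * Gf \<pi> t 1 + Gf \<pi> t 2)"
    by (simp add: field_simps power2_eq_square)
  finally show ?thesis .
qed

lemma lap_eq:
  "lap_moment \<pi> a lam l = exp (real l * (lam / a) * annealed_mean \<pi>) * Gf \<pi> (lam / a) l"
proof -
  define t where "t = lam / a"
  define m where "m = annealed_mean \<pi>"
  have "(\<lambda>\<mu>. (\<integral>u. exp (- (lam / a) * (u - annealed_mean \<pi>)) \<partial>\<mu>) ^ l) =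
        (\<lambda>\<mu>. exp (real l * t * m) * Zf t \<mu> ^ l)"
  proof
    fix \<mu> :: "real measure"
    have "(\<lambda>u. exp (- (lam / a) * (u - annealed_mean \<pi>))) = (\<lambda>u. exp (t * m) * exp (- t * u))"
      by (auto simp: fun_eq_iff t_def m_def mult_exp_exp algebra_simps)
    then have "(\<integral>u. exp (- (lam / a) * (u - annealed_mean \<pi>)) \<partial>\<mu>) = exp (t * m) * Zf t \<mu>"
      unfolding Zf_def by simp
    then show "(\<integral>u. exp (- (lam / a) * (u - annealed_mean \<pi>)) \<partial>\<mu>) ^ l = exp (real l * t * m) * Zf t \<mu> ^ l"
      by (simp add: power_mult_distrib exp_of_nat_mult[symmetric] algebra_simps)
  qed
  then show ?thesis unfolding lap_moment_def Gf_def t_def m_def by simp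
qed


lemma annealed_mean_nonneg: "0 \<le> annealed_mean \<pi>"
  unfolding annealed_mean_def
  by (intro integral_nonneg_AE AE_I2 integral_nonneg_AE) (auto simp: mu_facts(3))

lemma bridge:
  fixes f :: "real \<Rightarrow> real"
  assumes fm: "f \<in> borel_measurable pos_line" and fnn: "\<And>u. 0 < u \<Longrightarrow> 0 \<le> f u"
    and fin: "(\<integral>\<^sup>+\<mu>. (\<integral>\<^sup>+u. ennreal (f u) \<partial>\<mu>) \<partial>\<pi>) < \<infinity>"
  shows "integrable (join (distr \<pi> (subprob_algebra pos_line) (\<lambda>x. x))) f"
    "(\<integral>u. f u \<partial>join (distr \<pi> (subprob_algebra pos_line) (\<lambda>x. x))) = (\<integral>\<mu>. (\<integral>u. f u \<partial>\<mu>) \<partial>\<pi>)"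
proof -
  define \<nu> where "\<nu> = join (distr \<pi> (subprob_algebra pos_line) (\<lambda>x. x))"
  have idm: "(\<lambda>x. x) \<in> \<pi> \<rightarrow>\<^sub>M subprob_algebra pos_line"
  proof -
    have "(\<lambda>x. x) \<in> \<pi> \<rightarrow>\<^sub>M prob_algebra pos_line" using sets_pi by (rule measurable_ident_sets)
    then show ?thesis by (rule measurable_prob_algebraD)
  qed
  have setsD: "sets (distr \<pi> (subprob_algebra pos_line) (\<lambda>x. x)) = sets (subprob_algebra pos_line)" by simp
  have setsnu: "sets \<nu> = sets pos_line" unfolding \<nu>_def using setsD by (simp add: sets_join)
  then have spnu: "space \<nu> = {0<..}" using sets_eq_imp_space_eq space_pos_line by metis
  have fnu: "f \<in> borel_measurable \<nu>" using fm setsnu measurable_cong_sets by blast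
  have nnj: "(\<integral>\<^sup>+u. ennreal (f u) \<partial>\<nu>) = (\<integral>\<^sup>+\<mu>. (\<integral>\<^sup>+u. ennreal (f u) \<partial>\<mu>) \<partial>\<pi>)"
  proof -
    have "(\<integral>\<^sup>+u. ennreal (f u) \<partial>\<nu>) = (\<integral>\<^sup>+\<mu>. (\<integral>\<^sup>+u. ennreal (f u) \<partial>\<mu>) \<partial>distr \<pi> (subprob_algebra pos_line) (\<lambda>x. x))"
      unfolding \<nu>_def using fm setsD by (intro nn_integral_join) auto
    also have "\<dots> = (\<integral>\<^sup>+\<mu>. (\<integral>\<^sup>+u. ennreal (f u) \<partial>\<mu>) \<partial>\<pi>)"
      using idm fm by (subst nn_integral_distr) auto
    finally show ?thesis .
  qed
  show "integrable (join (distr \<pi> (subprob_algebra pos_line) (\<lambda>x. x))) f"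
    unfolding \<nu>_def[symmetric] using fnu fin nnj fnn spnu
    by (intro integrableI_nonneg) (auto intro!: AE_I2)
  have "(\<integral>u. f u \<partial>\<nu>) = enn2real (\<integral>\<^sup>+\<mu>. (\<integral>\<^sup>+u. ennreal (f u) \<partial>\<mu>) \<partial>\<pi>)"
    using fnu fnn spnu nnj by (subst integral_eq_nn_integral) (auto intro!: AE_I2)
  also have "\<dots> = (\<integral>\<mu>. (\<integral>u. f u \<partial>\<mu>) \<partial>\<pi>)"
  proof -
    have inner: "\<mu> \<in> space \<pi> \<Longrightarrow> (\<integral>u. f u \<partial>\<mu>) = enn2real (\<integral>\<^sup>+u. ennreal (f u) \<partial>\<mu>)" for \<mu>
      using fm fnn mu_facts[of \<mu>] measurable_cong_sets[of \<mu> pos_line borel borel]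
      by (intro integral_eq_nn_integral) (auto intro!: AE_I2)
    have mN: "(\<lambda>\<mu>. \<integral>\<^sup>+u. ennreal (f u) \<partial>\<mu>) \<in> borel_measurable \<pi>"
    proof -
      have "(\<lambda>\<mu>. \<integral>\<^sup>+u. ennreal (f u) \<partial>\<mu>) \<in> borel_measurable (subprob_algebra pos_line)"
        using fm by measurable
      then show ?thesis using idm by (rule measurable_compose[of "\<lambda>x. x", rotated])
    qed
    have "(\<integral>\<mu>. (\<integral>u. f u \<partial>\<mu>) \<partial>\<pi>) = (\<integral>\<mu>. enn2real (\<integral>\<^sup>+u. ennreal (f u) \<partial>\<mu>) \<partial>\<pi>)"
      using inner by (rule Bochner_Integration.integral_cong[OF refl])
    also have "\<dots> = enn2real (\<integral>\<^sup>+\<mu>. ennreal (enn2real (\<integral>\<^sup>+u. ennreal (f u) \<partial>\<mu>)) \<partial>\<pi>)"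
      using mN by (intro integral_eq_nn_integral) auto
    also have "(\<integral>\<^sup>+\<mu>. ennreal (enn2real (\<integral>\<^sup>+u. ennreal (f u) \<partial>\<mu>)) \<partial>\<pi>) = (\<integral>\<^sup>+\<mu>. (\<integral>\<^sup>+u. ennreal (f u) \<partial>\<mu>) \<partial>\<pi>)"
    proof (rule nn_integral_cong_AE)
      have "AE \<mu> in \<pi>. (\<integral>\<^sup>+u. ennreal (f u) \<partial>\<mu>) \<noteq> \<infinity>"
        using mN fin by (intro nn_integral_PInf_AE) auto
      then show "AE \<mu> in \<pi>. ennreal (enn2real (\<integral>\<^sup>+u. ennreal (f u) \<partial>\<mu>)) = (\<integral>\<^sup>+u. ennreal (f u) \<partial>\<mu>)"
        by (rule AE_mp) (auto intro!: AE_I2 simp: ennreal_enn2real_if)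
    qed
    finally show ?thesis by simp
  qed
  finally show "(\<integral>u. f u \<partial>join (distr \<pi> (subprob_algebra pos_line) (\<lambda>x. x))) = (\<integral>\<mu>. (\<integral>u. f u \<partial>\<mu>) \<partial>\<pi>)"
    unfolding \<nu>_def .
qed


lemma sets_nu: "sets (join (distr \<pi> (subprob_algebra pos_line) (\<lambda>x. x))) = sets pos_line"
  by (simp add: sets_join)

lemma space_nu: "space (join (distr \<pi> (subprob_algebra pos_line) (\<lambda>x. x))) = {0<..}"
  using sets_eq_imp_space_eq[OF sets_nu] space_pos_line by simp

lemma meas_nu: "g \<in> borel_measurable borel \<Longrightarrow> g \<in> borel_measurable (join (distr \<pi> (subprob_algebra pos_line) (\<lambda>x. x)))"
  using meas_pos_line[of g] sets_nu measurable_cong_sets by blast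

lemma bounded_fin:
  fixes f :: "real \<Rightarrow> real"
  assumes "\<And>u. 0 < u \<Longrightarrow> f u \<le> B"
  shows "(\<integral>\<^sup>+\<mu>. (\<integral>\<^sup>+u. ennreal (f u) \<partial>\<mu>) \<partial>\<pi>) < \<infinity>"
proof -
  interpret P: prob_space \<pi> by (rule pi_prob)
  have "(\<integral>\<^sup>+\<mu>. (\<integral>\<^sup>+u. ennreal (f u) \<partial>\<mu>) \<partial>\<pi>) \<le> (\<integral>\<^sup>+\<mu>. ennreal B \<partial>\<pi>)"
  proof (intro nn_integral_mono)
    fix \<mu> assume mu: "\<mu> \<in> space \<pi>"
    interpret Q: prob_space \<mu> using mu_facts(1)[OF mu] .
    have "(\<integral>\<^sup>+u. ennreal (f u) \<partial>\<mu>) \<le> (\<integral>\<^sup>+u. ennreal B \<partial>\<mu>)"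
      using assms mu_facts(3)[OF mu] by (intro nn_integral_mono) (auto intro!: ennreal_leI)
    then show "(\<integral>\<^sup>+u. ennreal (f u) \<partial>\<mu>) \<le> ennreal B" by (simp add: Q.emeasure_space_1)
  qed
  also have "\<dots> = ennreal B" by (simp add: P.emeasure_space_1)
  finally show ?thesis using le_less_trans by fastforce
qed

lemma annealed:
  assumes finite_mean: "(\<integral>\<^sup>+\<mu>. (\<integral>\<^sup>+u. ennreal u \<partial>\<mu>) \<partial>\<pi>) < \<infinity>"
  shows "(\<exists>H>0. \<forall>t\<ge>0. 1 + t\<^sup>2 * H \<le> exp (t * annealed_mean \<pi>) * Gf \<pi> t 1) \<or>
         (\<forall>t\<ge>0. exp (t * annealed_mean \<pi>) * Gf \<pi> t 1 = 1)"
proof -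
  interpret P: prob_space \<pi> by (rule pi_prob)
  define \<nu> where "\<nu> = join (distr \<pi> (subprob_algebra pos_line) (\<lambda>x. x))"
  define m where "m = annealed_mean \<pi>"
  have m0: "0 \<le> m" unfolding m_def by (rule annealed_mean_nonneg)
  have spnu: "space \<nu> = {0<..}" unfolding \<nu>_def by (rule space_nu)
  have mnu: "g \<in> borel_measurable borel \<Longrightarrow> g \<in> borel_measurable \<nu>" for g
    unfolding \<nu>_def by (rule meas_nu)
  have b1: "integrable \<nu> (\<lambda>u. 1::real)" "(\<integral>u. (1::real) \<partial>\<nu>) = (\<integral>\<mu>. (\<integral>u. (1::real) \<partial>\<mu>) \<partial>\<pi>)"
    unfolding \<nu>_def by (intro bridge bounded_fin[where B=1]; simp)+
  have "(\<integral>\<mu>. (\<integral>u. (1::real) \<partial>\<mu>) \<partial>\<pi>) = (\<integral>\<mu>. 1 \<partial>\<pi>)"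
    by (intro Bochner_Integration.integral_cong refl) (simp add: prob_space.prob_space[OF mu_facts(1)])
  with b1 have one: "(\<integral>u. (1::real) \<partial>\<nu>) = 1" by (simp add: P.prob_space)
  then have measnu: "measure \<nu> (space \<nu>) = 1" by simp
  have bu: "integrable \<nu> (\<lambda>u. u)" "(\<integral>u. u \<partial>\<nu>) = m"
    unfolding \<nu>_def m_def annealed_mean_def using finite_mean
    by (intro bridge; simp add: meas_pos_line)+
  have be: "integrable \<nu> (\<lambda>u. exp (- t * u))" "(\<integral>u. exp (- t * u) \<partial>\<nu>) = Gf \<pi> t 1" if t: "0 \<le> t" for t
  proof -
    have fin: "(\<integral>\<^sup>+\<mu>. (\<integral>\<^sup>+u. ennreal (exp (- t * u)) \<partial>\<mu>) \<partial>\<pi>) < \<infinity>"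
      using t by (intro bounded_fin[where B=1]) auto
    have mm: "(\<lambda>u. exp (- t * u)) \<in> borel_measurable pos_line" by (rule meas_pos_line) measurable
    show "integrable \<nu> (\<lambda>u. exp (- t * u))" unfolding \<nu>_def using fin mm by (intro bridge) auto
    show "(\<integral>u. exp (- t * u) \<partial>\<nu>) = Gf \<pi> t 1" unfolding \<nu>_def Gf_def Zf_def using fin mm
      by (subst bridge) auto
  qed
  define h where "h u = (min (u - m) 0)\<^sup>2" for u
  have hb: "0 < u \<Longrightarrow> h u \<le> m\<^sup>2" for u unfolding h_def using m0
    by (auto simp: min_def intro!: power_mono_odd power2_le_iff_abs_le[THEN iffD2] abs_le_iff[THEN iffD2])
  have bh: "integrable \<nu> h"
    unfolding \<nu>_def using hb by (intro bridge bounded_fin[where B="m\<^sup>2"]) (auto simp: h_def intro!: meas_pos_line)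
  define H where "H = (\<integral>u. h u \<partial>\<nu>) / 2"
  have H0: "0 \<le> H" unfolding H_def h_def by (intro divide_nonneg_nonneg integral_nonneg_AE AE_I2) auto
  have key: "integrable \<nu> (\<lambda>u. exp (- t * (u - m)))" "(\<integral>u. exp (- t * (u - m)) \<partial>\<nu>) = exp (t * m) * Gf \<pi> t 1"
    if t: "0 \<le> t" for t
  proof -
    have ee: "(\<lambda>u. exp (- t * (u - m))) = (\<lambda>u. exp (t * m) * exp (- t * u))"
      by (auto simp: fun_eq_iff mult_exp_exp algebra_simps)
    show "integrable \<nu> (\<lambda>u. exp (- t * (u - m)))" unfolding ee using be[OF t] by auto
    show "(\<integral>u. exp (- t * (u - m)) \<partial>\<nu>) = exp (t * m) * Gf \<pi> t 1" unfolding ee using be[OF t] by simp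
  qed
  have ic: "integrable \<nu> (\<lambda>u. c)" for c :: real
    using integrable_mult_left[OF b1(1), of c] by simp
  have icv: "(\<integral>u. c \<partial>\<nu>) = c" for c :: real
    using measnu by simp
  have iu: "integrable \<nu> (\<lambda>u. u - m)" by (rule Bochner_Integration.integrable_diff[OF bu(1) ic])
  have iuv: "(\<integral>u. u - m \<partial>\<nu>) = 0"
    using Bochner_Integration.integral_diff[OF bu(1) ic, of m] bu(2) icv by simp
  have lin: "(\<integral>u. exp (- t * (u - m)) - 1 + t * (u - m) \<partial>\<nu>) = exp (t * m) * Gf \<pi> t 1 - 1"
    "integrable \<nu> (\<lambda>u. exp (- t * (u - m)) - 1 + t * (u - m))" if t: "0 \<le> t" for t
  proof -
    have i2: "integrable \<nu> (\<lambda>u. t * (u - m))" by (rule integrable_mult_right[OF iu])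
    have v2: "(\<integral>u. t * (u - m) \<partial>\<nu>) = 0" using iuv by simp
    have i3: "integrable \<nu> (\<lambda>u. exp (- t * (u - m)) - 1)"
      by (rule Bochner_Integration.integrable_diff[OF key(1)[OF t] ic])
    show "integrable \<nu> (\<lambda>u. exp (- t * (u - m)) - 1 + t * (u - m))"
      by (rule Bochner_Integration.integrable_add[OF i3 i2])
    have "(\<integral>u. exp (- t * (u - m)) - 1 + t * (u - m) \<partial>\<nu>) =
       (\<integral>u. exp (- t * (u - m)) - 1 \<partial>\<nu>) + (\<integral>u. t * (u - m) \<partial>\<nu>)"
      by (rule Bochner_Integration.integral_add[OF i3 i2])
    also have "(\<integral>u. exp (- t * (u - m)) - 1 \<partial>\<nu>) = (\<integral>u. exp (- t * (u - m)) \<partial>\<nu>) - (\<integral>u. 1 \<partial>\<nu>)"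
      by (rule Bochner_Integration.integral_diff[OF key(1)[OF t] ic])
    finally show "(\<integral>u. exp (- t * (u - m)) - 1 + t * (u - m) \<partial>\<nu>) = exp (t * m) * Gf \<pi> t 1 - 1"
      using key(2)[OF t] v2 one by simp
  qed
  have pw: "t\<^sup>2 * (h u / 2) \<le> exp (- t * (u - m)) - 1 + t * (u - m)" if t: "0 \<le> t" for t u
  proof (cases "u - m \<ge> 0")
    case True
    then have "h u = 0" unfolding h_def by simp
    moreover have "1 + (- t * (u - m)) \<le> exp (- t * (u - m))" by (rule exp_ge_add_one_self)
    ultimately show ?thesis by simp
  next
    case False
    then have hu: "h u = (u - m)\<^sup>2" unfolding h_def by simp
    have "0 \<le> - t * (u - m)" using False t by (simp add: mult_nonneg_nonpos)
    then have "1 + (- t * (u - m)) + (- t * (u - m))\<^sup>2 / 2 \<le> exp (- t * (u - m))"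
      by (rule exp_lower_Taylor_quadratic)
    then show ?thesis unfolding hu by (simp add: power_mult_distrib power2_eq_square algebra_simps)
  qed
  have lower: "t\<^sup>2 * H \<le> exp (t * m) * Gf \<pi> t 1 - 1" if t: "0 \<le> t" for t
  proof -
    have "t\<^sup>2 * H = (\<integral>u. t\<^sup>2 * (h u / 2) \<partial>\<nu>)" unfolding H_def by simp
    also have "\<dots> \<le> (\<integral>u. exp (- t * (u - m)) - 1 + t * (u - m) \<partial>\<nu>)"
      using bh lin(2)[OF t] pw[OF t] by (intro integral_mono) auto
    finally show ?thesis using lin(1)[OF t] by simp
  qed
  show ?thesis
  proof (cases "H = 0")
    case False
    have "\<forall>t\<ge>0. 1 + t\<^sup>2 * H \<le> exp (t * m) * Gf \<pi> t 1"
      using lower by (auto simp: le_diff_eq add.commute)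
    moreover have "0 < H" using False H0 by simp
    ultimately show ?thesis unfolding m_def by blast
  next
    case True
    then have "(\<integral>u. h u \<partial>\<nu>) = 0" unfolding H_def by simp
    moreover have "AE u in \<nu>. 0 \<le> h u" by (simp add: h_def)
    ultimately have "AE u in \<nu>. h u = 0" using integral_nonneg_eq_0_iff_AE[OF bh] by simp
    moreover have "h u = 0 \<Longrightarrow> 0 \<le> u - m" for u unfolding h_def by (cases "u - m \<le> 0") auto
    ultimately have aege: "AE u in \<nu>. 0 \<le> u - m" by (auto elim: eventually_mono)
    from iuv have aeq: "AE u in \<nu>. u - m = 0" using integral_nonneg_eq_0_iff_AE[OF iu aege] by simp
    have "exp (t * m) * Gf \<pi> t 1 = 1" if t: "0 \<le> t" for t
    proof -
      have m1: "(\<lambda>u. exp (- t * (u - m))) \<in> borel_measurable \<nu>" by (rule mnu) measurable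
      have "AE u in \<nu>. exp (- t * (u - m)) = 1" using aeq by (rule eventually_mono) simp
      then have "(\<integral>u. exp (- t * (u - m)) \<partial>\<nu>) = (\<integral>u. 1 \<partial>\<nu>)"
        using m1 by (intro integral_cong_AE) auto
      then show ?thesis using key(2)[OF t] one by simp
    qed
    then show ?thesis unfolding m_def by auto
  qed
qed

end

theorem lemma3:
  fixes \<pi> :: "real measure measure"
    and \<alpha> :: real
    and f :: "nat \<Rightarrow> real \<Rightarrow> real"
    and n :: "nat \<Rightarrow> nat"
    and L :: "real \<Rightarrow> real"
    and a :: "nat \<Rightarrow> real"
  assumes pi_law: "\<pi> \<in> space (prob_algebra (prob_algebra pos_line))"
    and finite_mean: "(\<integral>\<^sup>+\<mu>. (\<integral>\<^sup>+u. ennreal u \<partial>\<mu>) \<partial>\<pi>) < \<infinity>"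
    and alpha: "1 < \<alpha>" "\<alpha> < 2"
    and f_asymp: "\<exists>c' C'. 0 < c' \<and> c' \<le> C' \<and>
                    (\<forall>lam>0. c' * lam powr \<alpha> \<le> f 1 lam \<and> f 1 lam \<le> C' * lam powr \<alpha>)"
    and n_mono: "mono n" and n_lim: "filterlim n at_top sequentially"
    and L_sv: "slowly_varying L"
    and a_def: "\<And>m. a m = real m powr (1 / \<alpha>) * L (real m)"
    and conv: "\<And>l lam. l \<ge> 1 \<Longrightarrow> lam > 0 \<Longrightarrow>
       (\<lambda>k. real (n k) * ln (lap_moment \<pi> (a (n k)) lam l)) \<longlonglongrightarrow> f l lam"
  shows "\<forall>lam>0. \<exists>c C. 0 < c \<and> 0 < C \<and> (\<exists>K. \<forall>k\<ge>K. \<forall>l\<ge>1.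
            c * real l \<le> real (n k) * ln (lap_moment \<pi> (a (n k)) lam l) \<and>
            real (n k) * ln (lap_moment \<pi> (a (n k)) lam l) \<le> C * (real l)\<^sup>2)"
  proof (intro allI impI)
  fix lam :: real assume lam: "lam > 0"
  define m where "m = annealed_mean \<pi>"
  have m0: "0 \<le> m" unfolding m_def by (rule annealed_mean_nonneg[OF pi_law])
  define t where "t k = lam / a (n k)" for k
  have Meq: "lap_moment \<pi> (a (n k)) lam l = exp (real l * (t k * m)) * Gf \<pi> (t k) l" for k l
    unfolding t_def m_def using lap_eq[OF pi_law] by (simp add: mult.assoc)
  obtain c' C' where cC: "0 < c'" "\<forall>lam>0. c' * lam powr \<alpha> \<le> f 1 lam \<and> f 1 lam \<le> C' * lam powr \<alpha>"
    using f_asymp by blast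
  define f1 where "f1 = f 1 lam"
  define f2 where "f2 = f 2 lam"
  have f1pos: "0 < f1"
  proof -
    have "c' * lam powr \<alpha> \<le> f 1 lam" using cC(2) lam by blast
    moreover have "0 < c' * lam powr \<alpha>" using cC(1) lam by simp
    ultimately show ?thesis unfolding f1_def by linarith
  qed
  have c1: "(\<lambda>k. real (n k) * ln (lap_moment \<pi> (a (n k)) lam 1)) \<longlonglongrightarrow> f1"
    unfolding f1_def using conv[of 1 lam] lam by simp
  have c2: "(\<lambda>k. real (n k) * ln (lap_moment \<pi> (a (n k)) lam 2)) \<longlonglongrightarrow> f2"
    unfolding f2_def using conv[of 2 lam] lam by simp
  have nreal: "filterlim (\<lambda>k. real (n k)) at_top sequentially"
    using filterlim_compose[OF filterlim_real_sequentially n_lim] by simp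
  have evL: "eventually (\<lambda>k. L (real (n k)) > 0) sequentially"
    using L_sv nreal unfolding slowly_varying_def filterlim_iff by blast
  have evN: "eventually (\<lambda>k. real (n k) \<ge> 1) sequentially"
  proof -
    have "\<forall>Z. eventually (\<lambda>k. Z \<le> real (n k)) sequentially" by (rule filterlim_at_top[THEN iffD1, OF nreal])
    then show ?thesis by blast
  qed
  have ev1lo: "eventually (\<lambda>k. real (n k) * ln (lap_moment \<pi> (a (n k)) lam 1) > f1 / 2) sequentially"
    using c1 f1pos by (intro order_tendstoD(1)) auto
  have ev1hi: "eventually (\<lambda>k. real (n k) * ln (lap_moment \<pi> (a (n k)) lam 1) < f1 + 1) sequentially"
    using c1 by (intro order_tendstoD(2)) auto
  have ev2hi: "eventually (\<lambda>k. real (n k) * ln (lap_moment \<pi> (a (n k)) lam 2) < \<bar>f2\<bar> + 1) sequentially"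
    using c2 by (intro order_tendstoD(2)) auto
  have "eventually (\<lambda>k. L (real (n k)) > 0 \<and> real (n k) \<ge> 1 \<and>
      real (n k) * ln (lap_moment \<pi> (a (n k)) lam 1) > f1 / 2 \<and>
      real (n k) * ln (lap_moment \<pi> (a (n k)) lam 1) < f1 + 1 \<and>
      real (n k) * ln (lap_moment \<pi> (a (n k)) lam 2) < \<bar>f2\<bar> + 1) sequentially"
    by (intro eventually_conj evL evN ev1lo ev1hi ev2hi)
  then obtain K0 where K0: "\<And>k. k \<ge> K0 \<Longrightarrow> L (real (n k)) > 0 \<and> real (n k) \<ge> 1 \<and>
      real (n k) * ln (lap_moment \<pi> (a (n k)) lam 1) > f1 / 2 \<and>
      real (n k) * ln (lap_moment \<pi> (a (n k)) lam 1) < f1 + 1 \<and>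
      real (n k) * ln (lap_moment \<pi> (a (n k)) lam 2) < \<bar>f2\<bar> + 1"
    unfolding eventually_sequentially by blast
  have tpos: "t k > 0" if "k \<ge> K0" for k
  proof -
    have "L (real (n k)) > 0" "real (n k) \<ge> 1" using K0[OF that] by auto
    then have "a (n k) > 0" using a_def by (simp add: powr_gt_zero)
    then show ?thesis unfolding t_def using lam by simp
  qed
  have ann: "(\<exists>H>0. \<forall>t\<ge>0. 1 + t\<^sup>2 * H \<le> exp (t * m) * Gf \<pi> t 1) \<or>
         (\<forall>t\<ge>0. exp (t * m) * Gf \<pi> t 1 = 1)"
    unfolding m_def by (rule annealed[OF pi_law finite_mean])
  have notcase2: "\<not> (\<forall>t\<ge>0. exp (t * m) * Gf \<pi> t 1 = 1)"
  proof
    assume h: "\<forall>t\<ge>0. exp (t * m) * Gf \<pi> t 1 = 1"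
    have "lap_moment \<pi> (a (n K0)) lam 1 = 1" using Meq[of K0 1] h tpos[of K0] by simp
    then show False using K0[of K0] f1pos by simp
  qed
  with ann obtain H where H: "H > 0" "\<And>t. t \<ge> 0 \<Longrightarrow> 1 + t\<^sup>2 * H \<le> exp (t * m) * Gf \<pi> t 1"
    by blast
  define B1 where "B1 = exp (f1 + 1) * (f1 + 1)"
  define B2 where "B2 = exp (\<bar>f2\<bar> + 1) * (\<bar>f2\<bar> + 1)"
  define S where "S = m\<^sup>2 * (B1 / H)"
  have B10: "0 \<le> B1" unfolding B1_def using f1pos by simp
  have B20: "0 \<le> B2" unfolding B2_def by simp
  have S0: "0 \<le> S" unfolding S_def using B10 H by simp
  show "\<exists>c C. 0 < c \<and> 0 < C \<and> (\<exists>K. \<forall>k\<ge>K. \<forall>l\<ge>1.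
            c * real l \<le> real (n k) * ln (lap_moment \<pi> (a (n k)) lam l) \<and>
            real (n k) * ln (lap_moment \<pi> (a (n k)) lam l) \<le> C * (real l)\<^sup>2)"
  proof (intro exI conjI allI impI)
    show "0 < f1 / 2" using f1pos by simp
    show "0 < 2 * S + B1 + B2 + 1" using S0 B10 B20 by simp
    fix k l :: nat assume k: "K0 \<le> k" and l: "1 \<le> l"
    define N where "N = real (n k)"
    define s where "s = t k * m"
    define G1 where "G1 = Gf \<pi> (t k) 1"
    define G2 where "G2 = Gf \<pi> (t k) 2"
    define Gl where "Gl = Gf \<pi> (t k) l"
    have tk: "0 \<le> t k" using tpos[OF k] by simp
    have s0: "0 \<le> s" unfolding s_def using tk m0 by simp
    have G1p: "0 < G1" unfolding G1_def by (rule G_pos(1)[OF pi_law tk])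
    have Glp: "0 < Gl" unfolding Gl_def by (rule G_pos(1)[OF pi_law tk])
    have Kk: "N \<ge> 1" "N * ln (exp s * G1) > f1 / 2" "N * ln (exp s * G1) < f1 + 1"
      "N * ln (exp (2 * s) * G2) < \<bar>f2\<bar> + 1"
    proof -
      have e1: "lap_moment \<pi> (a (n k)) lam 1 = exp s * G1" using Meq[of k 1] unfolding s_def G1_def by simp
      have e2: "lap_moment \<pi> (a (n k)) lam 2 = exp (2 * s) * G2" using Meq[of k 2] unfolding s_def G2_def by simp
      show "N \<ge> 1" "N * ln (exp s * G1) > f1 / 2" "N * ln (exp s * G1) < f1 + 1"
        "N * ln (exp (2 * s) * G2) < \<bar>f2\<bar> + 1"
        using K0[OF k] unfolding e1 e2 N_def by auto
    qed
    have M1pos: "0 < exp s * G1" using G1p by simp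
    have lnM1: "0 < ln (exp s * G1)"
    proof -
      have "0 < N * ln (exp s * G1)" using Kk(2) f1pos by linarith
      then show ?thesis using Kk(1) by (simp add: zero_less_mult_iff)
    qed
    have M1: "1 \<le> exp s * G1" using lnM1 M1pos by (simp add: ln_gt_zero_iff less_imp_le)
    have G2ge: "G1 ^ 2 \<le> G2" unfolding G1_def G2_def by (rule G_jensen[OF pi_law tk])
    have "(exp s * G1) ^ 2 \<le> exp (2 * s) * G2"
    proof -
      have "(exp s * G1) ^ 2 = exp (2 * s) * G1 ^ 2"
        by (simp add: power_mult_distrib power2_eq_square mult_exp_exp)
      also have "\<dots> \<le> exp (2 * s) * G2" using G2ge by simp
      finally show ?thesis .
    qed
    moreover have "1 \<le> (exp s * G1) ^ 2" using M1 by (simp add: one_le_power)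
    ultimately have M2: "1 \<le> exp (2 * s) * G2" by linarith
    have BB1: "N * (exp s * G1 - 1) \<le> B1" unfolding B1_def
      using Kk(1,3) M1 by (intro ln_to_lin) auto
    have BB2: "N * (exp (2 * s) * G2 - 1) \<le> B2" unfolding B2_def
      using Kk(1,4) M2 by (intro ln_to_lin) auto
    have SS: "N * s\<^sup>2 \<le> S"
    proof -
      have "(t k)\<^sup>2 * H \<le> exp s * G1 - 1" using H(2)[OF tk] unfolding s_def G1_def by simp
      then have "N * ((t k)\<^sup>2 * H) \<le> B1" using BB1 Kk(1)
        by (smt (verit) mult_left_mono)
      then have "N * (t k)\<^sup>2 \<le> B1 / H" using H(1) by (simp add: field_simps)
      then have "m\<^sup>2 * (N * (t k)\<^sup>2) \<le> m\<^sup>2 * (B1 / H)" by (intro mult_left_mono) auto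
      then show ?thesis unfolding S_def s_def by (simp add: power_mult_distrib algebra_simps)
    qed
    have up: "Gl \<le> 1 - real l * (1 - G1) + (real l)\<^sup>2 / 2 * (1 - 2 * G1 + G2)"
      unfolding Gl_def G1_def G2_def by (rule G_upper[OF pi_law tk])
    have Ml: "lap_moment \<pi> (a (n k)) lam l = exp (real l * s) * Gl"
      unfolding s_def Gl_def by (rule Meq)
    have "N * ln (exp (real l * s) * Gl) \<le> (2 * S + B1 + B2) * (real l)\<^sup>2"
      by (rule combine[OF Kk(1) s0 Glp up M1 M2 SS BB1 BB2 l])
    also have "\<dots> \<le> (2 * S + B1 + B2 + 1) * (real l)\<^sup>2" by (intro mult_right_mono) auto
    finally show "real (n k) * ln (lap_moment \<pi> (a (n k)) lam l) \<le> (2 * S + B1 + B2 + 1) * (real l)\<^sup>2"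
      unfolding Ml N_def .
    have "(exp s * G1) ^ l \<le> exp (real l * s) * Gl"
    proof -
      have "(exp s * G1) ^ l = exp (real l * s) * G1 ^ l"
        by (simp add: power_mult_distrib exp_of_nat_mult)
      also have "\<dots> \<le> exp (real l * s) * Gl"
        unfolding Gl_def G1_def using G_jensen[OF pi_law tk] by simp
      finally show ?thesis .
    qed
    then have "ln ((exp s * G1) ^ l) \<le> ln (exp (real l * s) * Gl)"
      using M1pos by (intro ln_mono) auto
    then have "real l * ln (exp s * G1) \<le> ln (exp (real l * s) * Gl)"
      using M1pos by (simp add: ln_realpow)
    then have "N * (real l * ln (exp s * G1)) \<le> N * ln (exp (real l * s) * Gl)"
      using Kk(1) by (intro mult_left_mono) auto
    moreover have "f1 / 2 * real l \<le> N * (real l * ln (exp s * G1))"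
    proof -
      have "f1 / 2 * real l \<le> (N * ln (exp s * G1)) * real l" using Kk(2) by (intro mult_right_mono) auto
      then show ?thesis by (simp add: algebra_simps)
    qed
    ultimately show "f1 / 2 * real l \<le> real (n k) * ln (lap_moment \<pi> (a (n k)) lam l)"
      unfolding Ml N_def by linarith
  qed
qed

end
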